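(* Let $G=(N,\Sigma,R,S)$ be a linear context-free grammar and fix any total order on $R$. Then $\Phi_3(G)$ is a test set for $L(G)$, and for every $k\ge 0$ the set $\Phi_k(G)$ contains at most $\sum_{i=0}^k |R|^i$ words.
   Context: A context-free grammar is $G=(N,\Sigma,R,S)$ with non-terminals $N$, terminals $\Sigma$, productions $R\subseteq N\times(N\uplus\Sigma)^*$, start symbol $S$; $L(G)$ is its language. $G$ is linear if every right-hand side has at most one non-terminal occurrence. A morphism $f:\Sigma^*\to\Gamma^*$ satisfies $f(\epsilon)=\epsilon$, $f(uv)=f(u)f(v)$. $T\subseteq L$ is a test set for $L$ if for every alphabet $\Gamma$ and morphisms $f,g:\Sigma^*\to\Gamma^*$ agreeing on all words of $T$, $f$ and $g$ agree on all words of $L$. Graph of $G$: vertices $N\uplus\{\bot\}$; for each rule $r = A\to uBv$ with $B\in N$, $u,v\in\Sigma^*$ there is an edge $(A,r,B)$ with $\overleftarrow{r}=u$, $\overrightarrow{r}=v$; for each rule $r=A\to u$ with $u\in\Sigma^*$ there is an edge $(A,r,\bot)$ with $\overleftarrow{r}=u$, $\overrightarrow{r}=\epsilon$. A path is a sequence of consecutive edges $(A_1,r_1,A_2)(A_2,r_2,A_3)\cdots(A_n,r_n,A_{n+1})$ (the empty path from a vertex to itself is allowed); it is accepting if $A_1=S$ and $A_{n+1}=\bot$, and then it corresponds to the word $\overleftarrow{r_1}\cdots\overleftarrow{r_n}\,\overrightarrow{r_n}\cdots\overrightarrow{r_1}\in L(G)$. Paths are identified with their rule sequences in $R^*$ and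 ordered by: $P_1<P_2$ iff $|P_1|<|P_2|$, or $|P_1|=|P_2|$ and $P_1$ is lexicographically smaller w.r.t. the fixed total order on $R$. A path is optimal if it is the $<$-minimal path among all paths from its first vertex to its last vertex. $\Phi_k(G)$ is the set of words corresponding to accepting paths of the form $P_1e_1P_2e_2\cdots P_ne_nP_{n+1}$ with $n\le k$, each $e_i$ a single edge, each $P_i$ ($1\le i\le n+1$) optimal, and each $P_ie_i$ ($1\le i\le n$) not optimal. *)

theory Defs
  imports Main
begin

datatype ('n, 't) sym = Nt 'n | Tm 't

fun isTm :: "('n, 't) sym \<Rightarrow> bool" where
  "isTm (Tm _) = True" | "isTm (Nt _) = False"

fun isNt :: "('n, 't) sym \<Rightarrow> bool" where
  "isNt (Nt _) = True" | "isNt (Tm _) = False"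

fun unTm :: "('n, 't) sym \<Rightarrow> 't" where
  "unTm (Tm a) = a" | "unTm (Nt _) = undefined"

fun unNt :: "('n, 't) sym \<Rightarrow> 'n" where
  "unNt (Nt A) = A" | "unNt (Tm _) = undefined"

type_synonym ('n, 't) rule = "'n \<times> ('n, 't) sym list"

definition cfg :: "'n set \<Rightarrow> 't set \<Rightarrow> ('n, 't) rule set \<Rightarrow> 'n \<Rightarrow> bool" where
  "cfg N \<Sigma> R S \<longleftrightarrow> finite N \<and> finite \<Sigma> \<and> finite R \<and> S \<in> N \<and>
     R \<subseteq> N \<times> lists (Nt ` N \<union> Tm ` \<Sigma>)"

definition linear_grammar :: "('n, 't) rule set \<Rightarrow> bool" where
  "linear_grammar R \<longleftrightarrow> (\<forall>(A, \<alpha>) \<in> R. length (filter isNt \<alpha>) \<le> 1)"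

definition derives1 :: "('n, 't) rule set \<Rightarrow> ('n, 't) sym list \<Rightarrow> ('n, 't) sym list \<Rightarrow> bool" where
  "derives1 R u v \<longleftrightarrow> (\<exists>x y A \<alpha>. u = x @ [Nt A] @ y \<and> v = x @ \<alpha> @ y \<and> (A, \<alpha>) \<in> R)"

definition Lang :: "('n, 't) rule set \<Rightarrow> 'n \<Rightarrow> 't list set" where
  "Lang R S = {w. (derives1 R)\<^sup>*\<^sup>* [Nt S] (map Tm w)}"

definition morphism_on :: "'t set \<Rightarrow> ('t list \<Rightarrow> 'g list) \<Rightarrow> bool" where
  "morphism_on \<Sigma> f \<longleftrightarrow> f [] = [] \<and> (\<forall>u \<in> lists \<Sigma>. \<forall>v \<in> lists \<Sigma>. f (u @ v) = f u @ f v)"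

text \<open>T is a test set for L (over alphabet Sigma), w.r.t. morphisms into 'g lists.
  The theorem is stated with 'g a free type variable, i.e. for every alphabet Gamma.\<close>
definition test_set :: "'g itself \<Rightarrow> 't set \<Rightarrow> 't list set \<Rightarrow> 't list set \<Rightarrow> bool" where
  "test_set _ \<Sigma> T L \<longleftrightarrow> T \<subseteq> L \<and>
     (\<forall>f g :: 't list \<Rightarrow> 'g list. morphism_on \<Sigma> f \<and> morphism_on \<Sigma> g \<and> (\<forall>w \<in> T. f w = g w)
        \<longrightarrow> (\<forall>w \<in> L. f w = g w))"

text \<open>Vertices are 'n option; None is the extra vertex bottom.\<close>

definition rtgt :: "('n, 't) rule \<Rightarrow> 'n option" where
  "rtgt r = (case dropWhile isTm (snd r) of [] \<Rightarrow> None | X # _ \<Rightarrow> Some (unNt X))"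

definition rleft :: "('n, 't) rule \<Rightarrow> 't list" where
  "rleft r = map unTm (takeWhile isTm (snd r))"

definition rright :: "('n, 't) rule \<Rightarrow> 't list" where
  "rright r = map unTm (drop 1 (dropWhile isTm (snd r)))"

fun is_path :: "('n, 't) rule set \<Rightarrow> 'n option \<Rightarrow> ('n, 't) rule list \<Rightarrow> 'n option \<Rightarrow> bool" where
  "is_path R X [] Y \<longleftrightarrow> X = Y"
| "is_path R X (r # rs) Y \<longleftrightarrow> r \<in> R \<and> X = Some (fst r) \<and> is_path R (rtgt r) rs Y"

definition path_word :: "('n, 't) rule list \<Rightarrow> 't list" where
  "path_word P = concat (map rleft P) @ concat (rev (map rright P))"

definition path_less :: "(('n, 't) rule \<times> ('n, 't) rule) set \<Rightarrow> ('n, 't) rule list \<Rightarrow> ('n, 't) rule list \<Rightarrow> bool" where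
  "path_less lt P1 P2 \<longleftrightarrow> length P1 < length P2 \<or> (length P1 = length P2 \<and> (P1, P2) \<in> lexord lt)"

definition optimal :: "('n, 't) rule set \<Rightarrow> (('n, 't) rule \<times> ('n, 't) rule) set \<Rightarrow> ('n, 't) rule list \<Rightarrow> bool" where
  "optimal R lt P \<longleftrightarrow> (\<exists>X Y. is_path R X P Y \<and> (\<forall>P'. is_path R X P' Y \<longrightarrow> \<not> path_less lt P' P))"

definition Phi :: "('n, 't) rule set \<Rightarrow> (('n, 't) rule \<times> ('n, 't) rule) set \<Rightarrow> 'n \<Rightarrow> nat \<Rightarrow> 't list set" where
  "Phi R lt S k = {path_word P | P Ps es.
      length es \<le> k \<and> length Ps = Suc (length es) \<and>
      P = concat (map2 (\<lambda>p e. p @ [e]) (butlast Ps) es) @ last Ps \<and>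
      is_path R (Some S) P None \<and>
      (\<forall>p \<in> set Ps. optimal R lt p) \<and>
      (\<forall>i < length es. \<not> optimal R lt (Ps ! i @ [es ! i]))}"

end

theory Submission
  imports Defs
begin


section \<open>Free group\<close>

definition flp :: "'a \<times> bool \<Rightarrow> 'a \<times> bool" where "flp x = (fst x, \<not> snd x)"

lemma flp_flp[simp]: "flp (flp x) = x" by (simp add: flp_def)
lemma flp_neq[simp]: "flp x \<noteq> x" "x \<noteq> flp x" by (auto simp: flp_def prod_eq_iff)
lemma flp_inj[simp]: "flp x = flp y \<longleftrightarrow> x = y" by (metis flp_flp)

fun reduced :: "('a \<times> bool) list \<Rightarrow> bool" where
  "reduced (x # y # zs) = (y \<noteq> flp x \<and> reduced (y # zs))"
| "reduced _ = True"

fun cns :: "'a \<times> bool \<Rightarrow> ('a \<times> bool) list \<Rightarrow> ('a \<times> bool) list" where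
  "cns x [] = [x]"
| "cns x (y # ys) = (if y = flp x then ys else x # y # ys)"

fun red :: "('a \<times> bool) list \<Rightarrow> ('a \<times> bool) list" where
  "red [] = []"
| "red (x # xs) = cns x (red xs)"

lemma reduced_tl: "reduced (x # xs) \<Longrightarrow> reduced xs"
  by (cases xs) auto

lemma reduced_cns: "reduced ys \<Longrightarrow> reduced (cns x ys)"
  by (cases ys) (auto dest: reduced_tl)

lemma reduced_red: "reduced (red xs)"
  by (induct xs) (auto intro: reduced_cns)

lemma red_reduced: "reduced xs \<Longrightarrow> red xs = xs"
proof (induct xs)
  case (Cons x xs)
  then have "red xs = xs" using reduced_tl by blast
  then show ?case using Cons.prems by (cases xs) auto
qed simp

lemma cns_cancel: "reduced ys \<Longrightarrow> cns x (cns (flp x) ys) = ys"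
proof (cases ys)
  case (Cons y ys')
  assume "reduced ys"
  then show ?thesis using Cons by (cases ys') auto
qed simp

lemma red_append_red2: "red (xs @ ys) = red (xs @ red ys)"
  by (induct xs) (auto simp: red_reduced reduced_red)

lemma red_append_foldr: "red (xs @ ys) = foldr cns xs (red ys)"
  by (induct xs) auto

lemma reduced_foldr: "reduced s \<Longrightarrow> reduced (foldr cns xs s)"
  by (induct xs) (auto intro: reduced_cns)

lemma foldr_cns_cns: "reduced s \<Longrightarrow> foldr cns (cns x w) s = cns x (foldr cns w s)"
proof (cases w)
  case (Cons y w')
  assume s: "reduced s"
  show ?thesis
  proof (cases "y = flp x")
    case True
    then have "cns x (foldr cns w s) = cns x (cns (flp x) (foldr cns w' s))" using Cons by simp
    also have "\<dots> = foldr cns w' s" by (rule cns_cancel[OF reduced_foldr[OF s]])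
    finally show ?thesis using Cons True by simp
  qed (simp add: Cons)
qed simp

lemma foldr_red: "reduced s \<Longrightarrow> foldr cns (red xs) s = foldr cns xs s"
  by (induct xs) (auto simp: foldr_cns_cns)

lemma red_append_red1: "red (xs @ ys) = red (red xs @ ys)"
  by (simp add: red_append_foldr foldr_red reduced_red)

definition finv :: "('a \<times> bool) list \<Rightarrow> ('a \<times> bool) list" where
  "finv xs = rev (map flp xs)"

lemma finv_inv[simp]: "finv (finv xs) = xs" by (simp add: finv_def rev_map comp_def)
lemma finv_Cons: "finv (x # xs) = finv xs @ [flp x]" by (simp add: finv_def)
lemma finv_append: "finv (xs @ ys) = finv ys @ finv xs" by (simp add: finv_def)
lemma length_inv[simp]: "length (finv xs) = length xs" by (simp add: finv_def)
lemma finv_Nil[simp]: "finv [] = []" by (simp add: finv_def)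
lemma finv_eq_Nil[simp]: "finv xs = [] \<longleftrightarrow> xs = []" by (simp add: finv_def)

lemma red_inv_left: "red (finv xs @ xs) = []"
proof (induct xs)
  case (Cons x xs)
  have e: "finv (x # xs) @ x # xs = finv xs @ (flp x # x # xs)" by (simp add: finv_Cons)
  have "red (finv xs @ (flp x # x # xs)) = red (finv xs @ red (flp x # x # xs))"
    by (rule red_append_red2)
  also have "red (flp x # x # xs) = red xs"
    using cns_cancel[of "red xs" "flp x"] by (simp add: reduced_red)
  also have "red (finv xs @ red xs) = red (finv xs @ xs)" by (rule red_append_red2[symmetric])
  finally show ?case using Cons e by simp
qed simp

lemma red_inv_right: "red (xs @ finv xs) = []"
  using red_inv_left[of "finv xs"] by simp

lemma reduced_append: "reduced (xs @ ys) \<longleftrightarrow> reduced xs \<and> reduced ys \<and> (xs = [] \<or> ys = [] \<or> hd ys \<noteq> flp (last xs))"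
proof (induct xs)
  case (Cons x xs)
  then show ?case by (cases xs; cases ys) auto
qed simp

lemma reduced_rev_map: "reduced xs \<Longrightarrow> reduced (finv xs)"
proof (induct xs)
  case (Cons x xs)
  then show ?case
    by (cases xs) (auto simp: finv_Cons reduced_append dest: reduced_tl simp: finv_def last_rev)
qed simp

lemma length_cns: "length (cns x ys) \<le> Suc (length ys)" by (cases ys) auto

lemma length_red: "length (red xs) \<le> length xs"
  by (induct xs) (auto intro: order_trans[OF length_cns])

lemma red_length_eq: "length (red xs) = length xs \<Longrightarrow> red xs = xs"
proof (induct xs)
  case (Cons x xs)
  have "length (red xs) = length xs"
    using Cons.prems length_cns[of x "red xs"] length_red[of xs] by simp
  then have r: "red xs = xs" by (rule Cons.hyps)
  show ?case using Cons.prems r by (cases xs) (auto split: if_splits)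
qed simp

lemma red_eq_iff: "red xs = xs \<longleftrightarrow> reduced xs"
  by (metis red_reduced reduced_red)

typedef 'a fg = "{xs :: ('a \<times> bool) list. reduced xs}" morphisms rep Abs
  by (rule exI[of _ "[]"]) simp

setup_lifting type_definition_fg

instantiation fg :: (type) group_add
begin
lift_definition zero_fg :: "'a fg" is "[]" by simp
lift_definition plus_fg :: "'a fg \<Rightarrow> 'a fg \<Rightarrow> 'a fg" is "\<lambda>x y. red (x @ y)" by (rule reduced_red)
lift_definition uminus_fg :: "'a fg \<Rightarrow> 'a fg" is finv by (rule reduced_rev_map)
definition minus_fg :: "'a fg \<Rightarrow> 'a fg \<Rightarrow> 'a fg" where "minus_fg x y = x + - y"
instance
proof
  fix a b c :: "'a fg"
  show "a + b + c = a + (b + c)"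
    by transfer (metis append_assoc red_append_red1 red_append_red2)
  show "0 + a = a" by transfer (simp add: red_reduced)
  show "a + 0 = a" by transfer (simp add: red_reduced)
  show "- a + a = 0" by transfer (simp add: red_inv_left)
  show "a + - b = a - b" by (simp add: minus_fg_def)
qed
end

lemma rep_plus: "rep (x + y) = red (rep x @ rep y)" by transfer simp
lemma rep_uminus: "rep (- x) = finv (rep x)" by transfer simp
lemma rep_zero: "rep 0 = []" by transfer simp
lemma reduced_rep: "reduced (rep x)" using rep by auto




definition pw :: "'a list \<Rightarrow> nat \<Rightarrow> 'a list" where "pw x n = concat (replicate n x)"

lemma pw_0[simp]: "pw x 0 = []" and pw_Suc: "pw x (Suc n) = x @ pw x n"
  by (simp_all add: pw_def)

lemma pw_add: "pw x (m + n) = pw x m @ pw x n" by (simp add: pw_def replicate_add)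

lemma pw_mult: "pw x (m * n) = pw (pw x m) n"
  by (induct n) (simp_all add: pw_Suc pw_add)

lemma length_pw[simp]: "length (pw x n) = n * length x" by (simp add: pw_def length_concat sum_list_replicate)

lemma comm_pw: "x @ y = y @ x \<Longrightarrow> x @ pw y n = pw y n @ x"
  by (induct n) (simp_all add: pw_Suc, metis append_assoc)

lemma comm_pws: "x @ y = y @ x \<Longrightarrow> pw x m @ pw y n = pw y n @ pw x m"
proof -
  assume "x @ y = y @ x"
  then have "x @ pw y n = pw y n @ x" by (rule comm_pw)
  then have "pw y n @ x = x @ pw y n" by simp
  then have "pw y n @ pw x m = pw x m @ pw y n" by (rule comm_pw)
  then show ?thesis by simp
qed

lemma comm_pw_eq: "x @ y = y @ x \<Longrightarrow> pw x (length y) = pw y (length x)"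
proof -
  assume c: "x @ y = y @ x"
  have "pw x (length y) @ pw y (length x) = pw y (length x) @ pw x (length y)" by (rule comm_pws[OF c])
  moreover have "length (pw x (length y)) = length (pw y (length x))" by simp
  ultimately show ?thesis by (metis append_eq_append_conv)
qed

lemma pw_nth: "i < n * length x \<Longrightarrow> pw x n ! i = x ! (i mod length x)"
proof (induct n arbitrary: i)
  case (Suc n)
  show ?case
  proof (cases "i < length x")
    case True then show ?thesis by (simp add: pw_Suc nth_append)
  next
    case False
    then have "pw x n ! (i - length x) = x ! ((i - length x) mod length x)"
      using Suc by (intro Suc.hyps) auto
    then show ?thesis using False by (simp add: pw_Suc nth_append le_mod_geq)
  qed
qed simp

lemma pw_eq_comm:
  assumes x: "x \<noteq> []" and y: "y \<noteq> []" and e: "pw x j = pw y k" and j: "j > 0"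
  shows "x @ y = y @ x"
proof -
  define L where "L = j * length x"
  have L: "L = k * length y" using arg_cong[OF e, of length] by (simp add: L_def)
  have Lpos: "L > 0" using x j by (simp add: L_def)
  have per: "x ! (i mod length x) = y ! (i mod length y)" for i
  proof -
    have "x ! (i mod length x) = x ! ((i mod L) mod length x)"
      by (simp add: L_def mod_mod_cancel)
    also have "\<dots> = pw x j ! (i mod L)" using Lpos by (simp add: pw_nth L_def)
    also have "\<dots> = pw y k ! (i mod L)" by (simp add: e)
    also have "\<dots> = y ! ((i mod L) mod length y)" using Lpos by (subst pw_nth) (simp_all add: L)
    also have "\<dots> = y ! (i mod length y)" by (simp add: L mod_mod_cancel)
    finally show ?thesis .
  qed
  have a: "(x @ y) ! i = x ! (i mod length x)" if "i < length x + length y" for i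
  proof (cases "i < length x")
    case False
    then have "(x @ y) ! i = y ! ((i - length x) mod length y)" using that by (simp add: nth_append)
    also have "\<dots> = x ! ((i - length x) mod length x)" by (simp add: per)
    also have "\<dots> = x ! (i mod length x)" using False by (simp add: le_mod_geq)
    finally show ?thesis .
  qed (simp add: nth_append)
  have b: "(y @ x) ! i = x ! (i mod length x)" if "i < length x + length y" for i
  proof (cases "i < length y")
    case True
    then show ?thesis by (simp add: nth_append per)
  next
    case False
    then have "(y @ x) ! i = x ! ((i - length y) mod length x)" using that by (simp add: nth_append)
    also have "\<dots> = y ! ((i - length y) mod length y)" by (simp add: per)
    also have "\<dots> = y ! (i mod length y)" using False by (simp add: le_mod_geq)
    finally show ?thesis by (simp add: per)
  qed
  show ?thesis by (rule nth_equalityI) (auto simp: a b)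
qed

lemma word_CT:
  assumes "x @ y = y @ x" "y @ z = z @ y" "y \<noteq> []"
  shows "x @ z = z @ x"
proof (cases "x = [] \<or> z = []")
  case False
  have 1: "pw x (length y) = pw y (length x)" by (rule comm_pw_eq[OF assms(1)])
  have 2: "pw y (length z) = pw z (length y)" by (rule comm_pw_eq[OF assms(2)])
  have "pw x (length y * length z) = pw y (length x * length z)" by (simp add: pw_mult 1)
  also have "\<dots> = pw y (length z * length x)" by (simp add: mult.commute)
  also have "\<dots> = pw z (length y * length x)" by (simp add: pw_mult 2)
  finally show ?thesis using False assms(3) by (intro pw_eq_comm) auto
qed auto

section \<open>Commutation transitivity in the free group\<close>

definition commute :: "'a::group_add \<Rightarrow> 'a \<Rightarrow> bool" where "commute x y \<longleftrightarrow> x + y = y + x"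

lemma commute_sym: "commute x y \<Longrightarrow> commute y x" by (simp add: commute_def)

lemma commute_conj:
  fixes u x y :: "'a::group_add"
  shows "commute (- u + x + u) (- u + y + u) \<longleftrightarrow> commute x y"
proof -
  have 1: "(- u + x + u) + (- u + y + u) = - u + (x + y) + u" by (simp add: add.assoc)
  have 2: "(- u + y + u) + (- u + x + u) = - u + (y + x) + u" by (simp add: add.assoc)
  have "commute (- u + x + u) (- u + y + u) \<longleftrightarrow> - u + (x + y) + u = - u + (y + x) + u"
    by (simp only: commute_def 1 2)
  also have "\<dots> \<longleftrightarrow> x + y = y + x" by (simp only: add_right_cancel add_left_cancel)
  finally show ?thesis by (simp only: commute_def)
qed

lemma commute_minus_left:
  fixes x y :: "'a::group_add"
  shows "commute (- x) y \<longleftrightarrow> commute x y"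
  unfolding commute_def
proof
  assume h: "-x + y = y + -x"
  have "x + (-x + y) + x = x + (y + -x) + x" using h by simp
  then show "x + y = y + x" by (simp add: add.assoc)
next
  assume h: "x + y = y + x"
  have "-x + (x + y) + -x = -x + (y + x) + -x" using h by simp
  then show "-x + y = y + -x" by (simp add: add.assoc del: add_uminus_conv_diff)
qed

lemma Abs_plus: "reduced a \<Longrightarrow> reduced b \<Longrightarrow> Abs a + Abs b = Abs (red (a @ b))"
  by (simp add: rep_inject[symmetric] rep_plus Abs_inverse reduced_red)

lemma Abs_uminus: "reduced a \<Longrightarrow> - Abs a = Abs (finv a)"
  by (simp add: rep_inject[symmetric] rep_uminus Abs_inverse reduced_rev_map)

lemma rep_Abs: "reduced x \<Longrightarrow> rep (Abs x) = x" by (simp add: Abs_inverse)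

lemma word_commute_fg:
  assumes "reduced a" "reduced b" "a @ b = b @ a"
  shows "commute (Abs a) (Abs b)"
  using assms by (simp add: commute_def Abs_plus)

lemma hd_inv: "xs \<noteq> [] \<Longrightarrow> hd (finv xs) = flp (last xs)" by (simp add: finv_def hd_rev last_map)
lemma last_inv: "xs \<noteq> [] \<Longrightarrow> last (finv xs) = flp (hd xs)" by (simp add: finv_def last_rev hd_map)

lemma red_shorter: "\<not> reduced xs \<Longrightarrow> length (red xs) < length xs"
  using red_length_eq[of xs] length_red[of xs] red_eq_iff[of xs] by linarith

lemma cyc_commute:
  assumes t: "reduced t" "t \<noteq> []" "hd t \<noteq> flp (last t)" and a: "reduced a"
    and c: "commute (Abs a) (Abs t)"
  shows "a @ t = t @ a \<or> finv a @ t = t @ finv a"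
proof -
  have eq: "red (a @ t) = red (t @ a)"
    using c t a by (simp add: commute_def Abs_plus Abs_inject reduced_red)
  let ?P1 = "a = [] \<or> hd t \<noteq> flp (last a)" and ?P2 = "a = [] \<or> hd a \<noteq> flp (last t)"
  have r1: "reduced (a @ t) \<longleftrightarrow> ?P1" using t a by (auto simp: reduced_append)
  have r2: "reduced (t @ a) \<longleftrightarrow> ?P2" using t a by (auto simp: reduced_append)
  show ?thesis
  proof (cases ?P1)
    case True
    then have "red (a @ t) = a @ t" using r1 red_reduced by blast
    moreover have "?P2"
    proof (rule ccontr)
      assume "\<not> ?P2"
      then have "length (red (t @ a)) < length (t @ a)" using r2 red_shorter by blast
      moreover have "length (red (a @ t)) = length (red (t @ a))" using eq by (rule arg_cong)
      ultimately show False using \<open>red (a @ t) = a @ t\<close> by simp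
    qed
    then have "red (t @ a) = t @ a" using r2 red_reduced by blast
    ultimately have "a @ t = t @ a" using eq by metis
    then show ?thesis by (rule disjI1)
  next
    case False
    have "\<not> ?P2"
    proof
      assume "?P2"
      then have "red (t @ a) = t @ a" using r2 red_reduced by blast
      moreover have "length (red (a @ t)) < length (a @ t)" using False r1 red_shorter by blast
      moreover have "length (red (a @ t)) = length (red (t @ a))" using eq by (rule arg_cong)
      ultimately show False by simp
    qed
    with False have an: "a \<noteq> []" and h1: "hd t = flp (last a)" and h2: "hd a = flp (last t)" by auto
    have ia: "reduced (finv a)" by (rule reduced_rev_map[OF a])
    have R1: "reduced (finv a @ t)" using t ia an h2
      by (auto simp: reduced_append last_inv)
    have R2: "reduced (t @ finv a)" using t ia an h1
      by (auto simp: reduced_append hd_inv)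
    have "commute (- Abs a) (Abs t)" using c by (simp add: commute_minus_left)
    then have "red (finv a @ t) = red (t @ finv a)"
      using t ia a by (simp add: commute_def Abs_plus Abs_uminus Abs_inject reduced_red)
    then have "finv a @ t = t @ finv a" using red_reduced[OF R1] red_reduced[OF R2] by metis
    then show ?thesis by (rule disjI2)
  qed
qed

lemma cyc_red_exists:
  "reduced b \<Longrightarrow> b \<noteq> [] \<Longrightarrow> \<exists>u t. b = u @ t @ finv u \<and> reduced t \<and> t \<noteq> [] \<and> hd t \<noteq> flp (last t)"
proof (induct "length b" arbitrary: b rule: less_induct)
  case less
  show ?case
  proof (cases "hd b = flp (last b)")
    case False then show ?thesis using less.prems by (intro exI[of _ "[]"] exI[of _ b]) auto
  next
    case True
    obtain x b1 where b1: "b = x # b1" using less.prems by (cases b) auto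
    have "b1 \<noteq> []" using True b1 by auto
    then obtain b' y where b': "b1 = b' @ [y]" by (cases b1 rule: rev_cases) auto
    have y: "y = flp x" using True b1 b' by auto
    have "b' \<noteq> []" using less.prems(1) b1 b' y by auto
    have "reduced (x # b')" using less.prems(1) b1 b' reduced_append[of "x # b'" "[y]"] by simp
  then have rb': "reduced b'" by (rule reduced_tl)
    obtain u t where "b' = u @ t @ finv u" "reduced t" "t \<noteq> []" "hd t \<noteq> flp (last t)"
      using less.hyps[of b'] rb' \<open>b' \<noteq> []\<close> b1 b' by auto
    then show ?thesis using b1 b' y
      by (intro exI[of _ "x # u"] exI[of _ t]) (simp add: finv_Cons)
  qed
qed

lemma cyc_comm_ex:
  assumes t: "reduced t" "t \<noteq> []" "hd t \<noteq> flp (last t)" and c: "commute x (Abs t)"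
  shows "\<exists>w. reduced w \<and> (x = Abs w \<or> x = - Abs w) \<and> w @ t = t @ w"
proof -
  have x: "x = Abs (rep x)" by (simp add: rep_inverse)
  have "commute (Abs (rep x)) (Abs t)" using c by (simp add: rep_inverse)
  then have d: "rep x @ t = t @ rep x \<or> finv (rep x) @ t = t @ finv (rep x)"
    by (rule cyc_commute[OF t reduced_rep])
  show ?thesis
  proof (cases "rep x @ t = t @ rep x")
    case True then show ?thesis using x reduced_rep by blast
  next
    case False
    then have e: "finv (rep x) @ t = t @ finv (rep x)" using d by blast
    have "- Abs (finv (rep x)) = x"
      by (simp add: Abs_uminus reduced_rev_map reduced_rep rep_inverse)
    then have "x = - Abs (finv (rep x))" by simp
    then show ?thesis using e reduced_rev_map[OF reduced_rep] by blast
  qed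
qed

lemma fg_CT:
  fixes a b c :: "'a fg"
  assumes "b \<noteq> 0" "commute a b" "commute c b"
  shows "commute a c"
proof -
  have rb: "reduced (rep b)" "rep b \<noteq> []" using assms(1) reduced_rep rep_zero rep_inject by metis+
  obtain u t where ut: "rep b = u @ t @ finv u" "reduced t" "t \<noteq> []" "hd t \<noteq> flp (last t)"
    using cyc_red_exists[OF rb] by blast
  have ru: "reduced u" using rb(1) ut(1) by (simp add: reduced_append)
  have "red (red (u @ t) @ finv u) = rep b"
    using ut(1) rb(1) by (simp add: red_append_red1[symmetric] red_reduced)
  then have "Abs (rep b) = Abs u + Abs t + - Abs u"
    using ut ru rb(1) by (simp add: Abs_plus Abs_uminus reduced_red reduced_rev_map)
  then have bt: "b = Abs u + Abs t + - Abs u" by (simp add: rep_inverse)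
  have tb: "Abs t = - Abs u + b + Abs u" by (simp add: bt add.assoc)
  define a' where "a' = - Abs u + a + Abs u"
  define c' where "c' = - Abs u + c + Abs u"
  have ca: "commute a' (Abs t)" using assms(2) by (simp add: a'_def tb commute_conj)
  have cc: "commute c' (Abs t)" using assms(3) by (simp add: c'_def tb commute_conj)
  obtain wa where wa: "reduced wa" "a' = Abs wa \<or> a' = - Abs wa" "wa @ t = t @ wa"
    using cyc_comm_ex[OF ut(2,3,4) ca] by blast
  obtain wc where wc: "reduced wc" "c' = Abs wc \<or> c' = - Abs wc" "wc @ t = t @ wc"
    using cyc_comm_ex[OF ut(2,3,4) cc] by blast
  have "wa @ wc = wc @ wa" using word_CT[OF wa(3) _ ut(3)] wc(3) by simp
  then have w: "commute (Abs wa) (Abs wc)" using wa wc by (intro word_commute_fg)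
  have w2: "commute (Abs wa) c'"
  proof (cases "c' = Abs wc")
    case True then show ?thesis using w by simp
  next
    case False
    then have "c' = - Abs wc" using wc(2) by simp
    then show ?thesis using w commute_minus_left[of "Abs wc" "Abs wa"] by (simp add: commute_def)
  qed
  have "commute a' c'"
  proof (cases "a' = Abs wa")
    case True then show ?thesis using w2 by simp
  next
    case False
    then have "a' = - Abs wa" using wa(2) by simp
    then show ?thesis using w2 commute_minus_left[of "Abs wa" c'] by simp
  qed
  then show ?thesis by (simp add: a'_def c'_def commute_conj)
qed




lemma gL1:
  fixes a h b c k d :: "'a::group_add"
  shows "(a + (h + b) = c + (k + d)) \<longleftrightarrow> ((- c + a) + h = k + (d + - b))"
proof
  assume e: "a + (h + b) = c + (k + d)"
  have "- c + (a + (h + b)) + - b = - c + (c + (k + d)) + - b" using e by simp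
  then show "(- c + a) + h = k + (d + - b)" by (simp add: add.assoc del: add_uminus_conv_diff)
next
  assume e: "(- c + a) + h = k + (d + - b)"
  have "c + ((- c + a) + h) + b = c + (k + (d + - b)) + b" using e by simp
  then show "a + (h + b) = c + (k + d)" by (simp add: add.assoc del: add_uminus_conv_diff)
qed

lemma gL2:
  fixes p0 p1 h k q0 q1 :: "'a::group_add"
  assumes "p0 + h = k + q0" "p1 + h = k + q1"
  shows "(- p0 + p1) + h = h + (- q0 + q1)"
proof -
  have k: "k = p0 + h + - q0" using assms(1) by (simp add: add.assoc del: add_uminus_conv_diff)
  have "- p0 + (p1 + h) = - p0 + (k + q1)" using assms(2) by simp
  then show ?thesis by (simp add: k add.assoc del: add_uminus_conv_diff)
qed

lemma gL3:
  fixes p0 p1 h k q0 q1 :: "'a::group_add"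
  assumes "p1 + h = k + q1" "(- p0 + p1) + h = h + (- q0 + q1)"
  shows "p0 + h = k + q0"
proof -
  have "p0 + ((- p0 + p1) + h) + (- q1 + q0) = p0 + (h + (- q0 + q1)) + (- q1 + q0)" using assms(2) by simp
  then have "p1 + h + - q1 + q0 = p0 + h" by (simp add: add.assoc del: add_uminus_conv_diff)
  then show ?thesis using assms(1) by (simp add: add.assoc del: add_uminus_conv_diff)
qed

lemma gL4:
  fixes c a h a' e :: "'a::group_add"
  shows "c + (a + (h + a')) = (a + (h + a')) + e \<longleftrightarrow> (- a + c + a) + h = h + (a' + e + - a')"
proof
  assume E: "c + (a + (h + a')) = (a + (h + a')) + e"
  have "- a + (c + (a + (h + a'))) + - a' = - a + ((a + (h + a')) + e) + - a'" using E by simp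
  then show "(- a + c + a) + h = h + (a' + e + - a')" by (simp add: add.assoc del: add_uminus_conv_diff)
next
  assume E: "(- a + c + a) + h = h + (a' + e + - a')"
  have "a + ((- a + c + a) + h) + a' = a + (h + (a' + e + - a')) + a'" using E by simp
  then show "c + (a + (h + a')) = (a + (h + a')) + e" by (simp add: add.assoc del: add_uminus_conv_diff)
qed

lemma gL5:
  fixes c h h' e :: "'a::group_add"
  assumes "c + h = h + e" "c + h' = h' + e"
  shows "(h' + - h) + c = c + (h' + - h)"
proof -
  have e1: "e = - h + c + h" using assms(1) by (simp add: add.assoc del: add_uminus_conv_diff)
  have e2: "e = - h' + c + h'" using assms(2) by (simp add: add.assoc del: add_uminus_conv_diff)
  have "h' + (- h + c + h) + - h = h' + (- h' + c + h') + - h" using e1 e2 by simp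
  then show ?thesis by (simp add: add.assoc del: add_uminus_conv_diff)
qed

lemma gL6:
  fixes c h0 h1 e :: "'a::group_add"
  assumes "c + h1 = h1 + e" "(h1 + - h0) + c = c + (h1 + - h0)"
  shows "c + h0 = h0 + e"
proof -
  have h0: "h0 = - (h1 + - h0) + h1" by (simp add: minus_add add.assoc del: add_uminus_conv_diff)
  have "- (h1 + - h0) + (c + (h1 + - h0)) + h0 = - (h1 + - h0) + ((h1 + - h0) + c) + h0"
    using assms(2) by simp
  then have "c + h0 = - (h1 + - h0) + (c + h1)" by (simp add: minus_add add.assoc del: add_uminus_conv_diff)
  also have "\<dots> = - (h1 + - h0) + (h1 + e)" using assms(1) by simp
  also have "\<dots> = h0 + e" by (simp add: minus_add add.assoc del: add_uminus_conv_diff)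
  finally show ?thesis .
qed

lemma gL7:
  fixes a c :: "'a::group_add"
  shows "- a + c + a = 0 \<longleftrightarrow> c = 0"
  by (metis add.left_neutral add_minus_cancel add.assoc minus_add_cancel add_left_cancel add.right_neutral)

lemma cube_group:
  fixes FX1 FX2 FX3 FX4 FY1 FY2 FY3 FY4 GX1 GX2 GX3 GX4 GY1 GY2 GY3 GY4 :: "bool \<Rightarrow> 'a fg"
    and FM GM :: "'a fg"
  assumes A: "\<And>a1 a2 a3 a4. a1 \<or> a2 \<or> a3 \<or> a4 \<Longrightarrow>
     FX1 a1 + (FX2 a2 + (FX3 a3 + (FX4 a4 + (FM + (FY4 a4 + (FY3 a3 + (FY2 a2 + FY1 a1)))))))
   = GX1 a1 + (GX2 a2 + (GX3 a3 + (GX4 a4 + (GM + (GY4 a4 + (GY3 a3 + (GY2 a2 + GY1 a1)))))))"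
  shows "FX1 False + (FX2 False + (FX3 False + (FX4 False + (FM + (FY4 False + (FY3 False + (FY2 False + FY1 False)))))))
   = GX1 False + (GX2 False + (GX3 False + (GX4 False + (GM + (GY4 False + (GY3 False + (GY2 False + GY1 False)))))))"
proof -
  define H' where "H' b3 b4 = FX3 b3 + (FX4 b4 + (FM + (FY4 b4 + FY3 b3)))" for b3 b4
  define H where "H b2 b3 b4 = FX2 b2 + (H' b3 b4 + FY2 b2)" for b2 b3 b4
  define K where "K b2 b3 b4 = GX2 b2 + (GX3 b3 + (GX4 b4 + (GM + (GY4 b4 + (GY3 b3 + GY2 b2)))))" for b2 b3 b4
  define p where "p u = - GX1 u + FX1 u" for u
  define q where "q u = GY1 u + - FY1 u" for u
  have E: "p a1 + H a2 a3 a4 = K a2 a3 a4 + q a1" if "a1 \<or> a2 \<or> a3 \<or> a4" for a1 a2 a3 a4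
  proof -
    have "FX1 a1 + (H a2 a3 a4 + FY1 a1) = GX1 a1 + (K a2 a3 a4 + GY1 a1)"
      using A[OF that] by (simp add: H_def H'_def K_def add.assoc)
    then show ?thesis unfolding p_def q_def by (rule gL1[THEN iffD1])
  qed
  define c where "c = - p False + p True"
  define e where "e = - q False + q True"
  have C: "c + H b2 b3 b4 = H b2 b3 b4 + e" if "b2 \<or> b3 \<or> b4" for b2 b3 b4
    unfolding c_def e_def by (rule gL2) (use E that in auto)
  have goalH: "c + H False False False = H False False False + e"
  proof -
    define cj where "cj j = - FX2 j + c + FX2 j" for j
    define ej where "ej j = FY2 j + e + - FY2 j" for j
    have C': "cj b2 + H' b3 b4 = H' b3 b4 + ej b2" if "b2 \<or> b3 \<or> b4" for b2 b3 b4
      using C[OF that] unfolding cj_def ej_def H_def by (simp only: gL4)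
    have "cj False + H' False False = H' False False + ej False"
    proof (cases "c = 0")
      case True
      then have cF: "cj False = 0" by (simp add: cj_def)
      have "cj False + H' False True = H' False True + ej False" by (rule C') simp
      then have "H' False True = H' False True + ej False" using cF by simp
      then have "- H' False True + H' False True = - H' False True + (H' False True + ej False)"
        by (rule arg_cong)
      then have "ej False = 0" by (simp add: add.assoc[symmetric])
      then show ?thesis using cF by simp
    next
      case False
      then have cT: "cj True \<noteq> 0" unfolding cj_def using gL7 by blast
      have z0: "commute (H' False True + - H' False False) (cj True)"
        unfolding commute_def by (rule gL5) (rule C', simp)+
      have fin: "commute (H' False True + - H' False False) (cj False) \<Longrightarrow> ?thesis"
        by (rule gL6[of _ "H' False True"]) (auto intro: C' simp: commute_def)
      have via: ?thesis if dd: "H' d3 d4 \<noteq> H' d3' d4'" "d3 \<or> d4" "d3' \<or> d4'" for d3 d4 d3' d4'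
      proof -
        let ?z = "H' d3' d4' + - H' d3 d4"
        have zn: "?z \<noteq> 0" using dd(1) by (metis add_right_cancel add.left_inverse add.right_inverse)
        have zF: "commute ?z (cj False)"
          unfolding commute_def by (rule gL5) (rule C', use dd in simp)+
        have zT: "commute ?z (cj True)"
          unfolding commute_def by (rule gL5) (rule C', simp)+
        have cc: "commute (cj False) (cj True)"
          by (rule fg_CT[OF zn]) (use zF zT in \<open>auto intro: commute_sym\<close>)
        have "commute (H' False True + - H' False False) (cj False)"
          by (rule fg_CT[OF cT z0 cc])
        then show ?thesis by (rule fin)
      qed
      show ?thesis
      proof (cases "H' False True = H' True False \<and> H' False True = H' True True")
        case True
        then have tt: "H' True False = H' True True" by metis
        have "FX3 True + ((FX4 False + (FM + FY4 False)) + FY3 True)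
                 = FX3 True + ((FX4 True + (FM + FY4 True)) + FY3 True)"
          using tt by (simp add: H'_def add.assoc)
        then have N: "FX4 False + (FM + FY4 False) = FX4 True + (FM + FY4 True)"
          by (simp only: add_left_cancel add_right_cancel)
        have "H' False False = FX3 False + ((FX4 False + (FM + FY4 False)) + FY3 False)"
          by (simp add: H'_def add.assoc)
        also have "\<dots> = H' False True" by (simp only: N) (simp add: H'_def add.assoc)
        finally have "H' False False = H' False True" .
        moreover have "cj False + H' False True = H' False True + ej False" by (rule C') simp
        ultimately show ?thesis by simp
      next
        case False
        then have "H' False True \<noteq> H' True False \<or> H' False True \<noteq> H' True True" by blast
        then show ?thesis
        proof
          assume "H' False True \<noteq> H' True False" then show ?thesis by (rule via) simp_all
        next
          assume "H' False True \<noteq> H' True True" then show ?thesis by (rule via) simp_all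
        qed
      qed
    qed
    then show ?thesis unfolding cj_def ej_def H_def by (simp only: gL4)
  qed
  have "p False + H False False False = K False False False + q False"
    by (rule gL3[OF E goalH[unfolded c_def e_def]]) simp
  then have "FX1 False + (H False False False + FY1 False) = GX1 False + (K False False False + GY1 False)"
    unfolding p_def q_def by (rule gL1[THEN iffD2])
  then show ?thesis by (simp add: H_def H'_def K_def add.assoc)
qed




lemma isTm_or_isNt: "isTm x \<or> isNt x" by (cases x) auto
lemma not_isTm: "\<not> isTm x \<longleftrightarrow> isNt x" by (cases x) auto

lemma map_Tm_unTm: "\<forall>x\<in>set xs. isTm x \<Longrightarrow> map Tm (map unTm xs) = xs"
proof (induct xs)
  case (Cons x xs) then show ?case by (cases x) auto
qed simp

lemma lin_rule: "linear_grammar R \<Longrightarrow> (A, \<alpha>) \<in> R \<Longrightarrow> length (filter isNt \<alpha>) \<le> 1"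
  unfolding linear_grammar_def by (drule bspec) auto

lemma rule_decomp:
  assumes lin: "linear_grammar R" and r: "r \<in> R"
  shows "snd r = map Tm (rleft r) @ (case rtgt r of None \<Rightarrow> [] | Some B \<Rightarrow> [Nt B]) @ map Tm (rright r)"
proof -
  obtain A \<alpha> where ra: "r = (A, \<alpha>)" by (cases r)
  have Aa: "(A, \<alpha>) \<in> R" using r ra by simp
  have lin1: "length (filter isNt \<alpha>) \<le> 1" by (rule lin_rule[OF lin Aa])
  have tw: "map Tm (rleft r) = takeWhile isTm \<alpha>"
    unfolding rleft_def ra snd_conv by (rule map_Tm_unTm) (auto dest: set_takeWhileD)
  have split: "takeWhile isTm \<alpha> @ dropWhile isTm \<alpha> = \<alpha>" by (rule takeWhile_dropWhile_id)
  have fs: "filter isNt \<alpha> = filter isNt (takeWhile isTm \<alpha>) @ filter isNt (dropWhile isTm \<alpha>)"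
    using filter_append[of isNt "takeWhile isTm \<alpha>" "dropWhile isTm \<alpha>"] split by simp
  have "takeWhile isTm \<alpha> @ dropWhile isTm \<alpha> = map Tm (rleft r) @ (case rtgt r of None \<Rightarrow> [] | Some B \<Rightarrow> [Nt B]) @ map Tm (rright r)"
  proof (cases "dropWhile isTm \<alpha>")
    case Nil
    have n1: "rtgt r = None" "rright r = []" unfolding rtgt_def rright_def ra snd_conv Nil by simp_all
    show ?thesis unfolding Nil n1 tw by simp
  next
    case (Cons X rest)
    have nX: "\<not> isTm X" using Cons dropWhile_eq_Cons_conv[of isTm \<alpha> X rest] by simp
    then obtain B where XB: "X = Nt B" by (cases X) auto
    have "filter isNt \<alpha> = filter isNt (takeWhile isTm \<alpha>) @ [Nt B] @ filter isNt rest"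
      using fs Cons XB by simp
    then have "filter isNt rest = []" using lin1 by simp
    then have "\<forall>x\<in>set rest. isTm x" by (auto simp: filter_empty_conv not_isTm[symmetric])
    then have rr: "map Tm (rright r) = rest" unfolding rright_def ra snd_conv Cons
      by (simp del: map_map) (rule map_Tm_unTm)
    have "rtgt r = Some B" by (simp add: rtgt_def ra Cons XB)
    then show ?thesis using Cons XB tw rr by simp
  qed
  then show ?thesis using split ra by simp
qed

lemma rule_words_in:
  assumes cfg: "cfg N \<Sigma> R S" and lin: "linear_grammar R" and r: "r \<in> R"
  shows "rleft r \<in> lists \<Sigma>" "rright r \<in> lists \<Sigma>"
proof -
  have "r \<in> N \<times> lists (Nt ` N \<union> Tm ` \<Sigma>)" using cfg r unfolding cfg_def by blast
  then have "snd r \<in> lists (Nt ` N \<union> Tm ` \<Sigma>)" by (simp add: mem_Times_iff)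
  then have s: "set (snd r) \<subseteq> Nt ` N \<union> Tm ` \<Sigma>" by (simp add: in_lists_conv_set subset_iff)
  note d = rule_decomp[OF lin r]
  have "set (map Tm (rleft r)) \<subseteq> set (snd r)" "set (map Tm (rright r)) \<subseteq> set (snd r)"
    by (subst d; auto)+
  then show "rleft r \<in> lists \<Sigma>" "rright r \<in> lists \<Sigma>" using s by auto
qed

lemma is_path_append: "is_path R X (P @ Q) Z \<longleftrightarrow> (\<exists>Y. is_path R X P Y \<and> is_path R Y Q Z)"
  by (induct P arbitrary: X) auto

lemma is_path_det: "is_path R X P Y \<Longrightarrow> is_path R X P Y' \<Longrightarrow> Y = Y'"
  by (induct P arbitrary: X) auto

lemma is_path_set: "is_path R X P Y \<Longrightarrow> set P \<subseteq> R"
  by (induct P arbitrary: X) auto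

definition Lw :: "('n, 't) rule list \<Rightarrow> 't list" where "Lw P = concat (map rleft P)"
definition Rw :: "('n, 't) rule list \<Rightarrow> 't list" where "Rw P = concat (rev (map rright P))"

lemma path_word_LR: "path_word P = Lw P @ Rw P" by (simp add: path_word_def Lw_def Rw_def)
lemma Lw_append[simp]: "Lw (P @ Q) = Lw P @ Lw Q" by (simp add: Lw_def)
lemma Rw_append[simp]: "Rw (P @ Q) = Rw Q @ Rw P" by (simp add: Rw_def)
lemma Lw_Cons[simp]: "Lw (r # Q) = rleft r @ Lw Q" by (simp add: Lw_def)
lemma Rw_Cons[simp]: "Rw (r # Q) = Rw Q @ rright r" by (simp add: Rw_def)
lemma Lw_Nil[simp]: "Lw [] = []" and Rw_Nil[simp]: "Rw [] = []" by (simp_all add: Lw_def Rw_def)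

lemma path_word_append: "path_word (P @ Q) = Lw P @ path_word Q @ Rw P"
  by (simp add: path_word_LR)

lemma LR_in_lists:
  assumes "cfg N \<Sigma> R S" "linear_grammar R" "set P \<subseteq> R"
  shows "Lw P \<in> lists \<Sigma>" "Rw P \<in> lists \<Sigma>"
  using assms(3) by (induct P) (auto dest: rule_words_in[OF assms(1,2)])

section \<open>Language as path words\<close>

definition sf :: "('n, 't) rule list \<Rightarrow> 'n option \<Rightarrow> ('n, 't) sym list" where
  "sf P Y = map Tm (Lw P) @ (case Y of None \<Rightarrow> [] | Some B \<Rightarrow> [Nt B]) @ map Tm (Rw P)"

lemma derives1_ctx: "derives1 R u v \<Longrightarrow> derives1 R (x @ u @ y) (x @ v @ y)"
  unfolding derives1_def by (metis append_assoc)

lemma derives_ctx: "(derives1 R)\<^sup>*\<^sup>* u v \<Longrightarrow> (derives1 R)\<^sup>*\<^sup>* (x @ u @ y) (x @ v @ y)"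
  by (induct rule: rtranclp_induct) (auto intro: rtranclp.rtrancl_into_rtrancl derives1_ctx)

lemma derives_path:
  assumes lin: "linear_grammar R"
  shows "is_path R (Some A) P Y \<Longrightarrow> (derives1 R)\<^sup>*\<^sup>* [Nt A] (sf P Y)"
proof (induct P arbitrary: A)
  case Nil then have "Y = Some A" by simp
  then show ?case by (simp add: sf_def)
next
  case (Cons r P')
  have r: "r \<in> R" "fst r = A" and P': "is_path R (rtgt r) P' Y" using Cons.prems by auto
  have d1: "derives1 R [Nt A] (snd r)"
    unfolding derives1_def using r by (intro exI[of _ "[]"] exI[of _ "[]"] exI[of _ A] exI[of _ "snd r"]) auto
  note dec = rule_decomp[OF lin r(1)]
  show ?case
  proof (cases "rtgt r")
    case None
    then have "P' = [] \<and> Y = None" using P' by (cases P') auto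
    then have "sf (r # P') Y = snd r" using dec None by (simp add: sf_def)
    then show ?thesis using d1 by simp
  next
    case (Some B)
    have ih: "(derives1 R)\<^sup>*\<^sup>* [Nt B] (sf P' Y)" using Cons.hyps P' Some by simp
    have "(derives1 R)\<^sup>*\<^sup>* (map Tm (rleft r) @ [Nt B] @ map Tm (rright r))
            (map Tm (rleft r) @ sf P' Y @ map Tm (rright r))" by (rule derives_ctx[OF ih])
    moreover have "map Tm (rleft r) @ sf P' Y @ map Tm (rright r) = sf (r # P') Y"
      by (simp add: sf_def)
    moreover have "snd r = map Tm (rleft r) @ [Nt B] @ map Tm (rright r)" using dec Some by simp
    ultimately show ?thesis using d1 by (metis converse_rtranclp_into_rtranclp)
  qed
qed

lemma split_unique:
  assumes e: "map Tm l1 @ [Nt B] @ map Tm r1 = x @ [Nt A] @ y"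
  shows "x = map Tm l1 \<and> A = B \<and> y = map Tm r1"
proof -
  have f: "filter isNt (map Tm l1 @ [Nt B] @ map Tm r1) = [Nt B]"
    by (simp add: filter_empty_conv)
  have g: "filter isNt (x @ [Nt A] @ y) = [Nt B]" using f by (simp only: e)
  have "length (filter isNt (x @ [Nt A] @ y)) = 1" by (simp only: g) simp
  then have "filter isNt x = []" by simp
  then have xT: "\<forall>z\<in>set x. isTm z" by (auto simp: filter_empty_conv not_isTm[symmetric])
  have len: "length x = length l1"
  proof (rule ccontr)
    assume "length x \<noteq> length l1"
    then consider "length x < length l1" | "length l1 < length x" by linarith
    then show False
    proof cases
      case 1
      have "(map Tm l1 @ [Nt B] @ map Tm r1) ! length x = Tm (l1 ! length x)" using 1 by (simp add: nth_append)
      moreover have "(x @ [Nt A] @ y) ! length x = Nt A" by simp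
      ultimately show False using e by simp
    next
      case 2
      have "(map Tm l1 @ [Nt B] @ map Tm r1) ! length l1 = Nt B" by (simp add: nth_append)
      moreover have "(x @ [Nt A] @ y) ! length l1 = x ! length l1" using 2 by (simp add: nth_append)
      moreover have "isTm (x ! length l1)" using xT 2 by simp
      ultimately show False using e by simp
    qed
  qed
  then show ?thesis using e by (auto simp: append_eq_append_conv)
qed

lemma path_of_derives:
  assumes lin: "linear_grammar R"
  shows "(derives1 R)\<^sup>*\<^sup>* [Nt S] v \<Longrightarrow> \<exists>P Y. is_path R (Some S) P Y \<and> v = sf P Y"
proof (induct rule: rtranclp_induct)
  case base
  show ?case by (rule exI[of _ "[]"], rule exI[of _ "Some S"]) (simp add: sf_def)
next
  case (step v v')
  obtain P Y where PY: "is_path R (Some S) P Y" "v = sf P Y" using step.hyps(3) by blast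
  obtain x y A \<alpha> where d: "v = x @ [Nt A] @ y" "v' = x @ \<alpha> @ y" "(A, \<alpha>) \<in> R"
    using step.hyps(2) by (auto simp: derives1_def)
  have sv: "sf P Y = x @ [Nt A] @ y" using PY(2) d(1) by (rule trans[OF sym])
  obtain B where YB: "Y = Some B"
  proof (cases Y)
    case None
    have "Nt A \<in> set (sf P Y)" unfolding sv by simp
    then show ?thesis using None by (auto simp: sf_def)
  qed
  have "map Tm (Lw P) @ [Nt B] @ map Tm (Rw P) = x @ [Nt A] @ y" using sv by (simp only: sf_def YB option.case)
  then have xy0: "x = map Tm (Lw P) \<and> A = B \<and> y = map Tm (Rw P)" by (rule split_unique)
  then have xy: "x = map Tm (Lw P)" "A = B" "y = map Tm (Rw P)" by simp_all
  define r where "r = (A, \<alpha>)"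
  have rR: "r \<in> R" using d r_def by simp
  have path: "is_path R (Some S) (P @ [r]) (rtgt r)"
    using PY YB xy rR by (auto simp: is_path_append r_def)
  have "sf (P @ [r]) (rtgt r) = x @ snd r @ y"
    using rule_decomp[OF lin rR] xy by (simp add: sf_def)
  then have "v' = sf (P @ [r]) (rtgt r)" using d r_def by simp
  then show ?case using path by blast
qed

lemma Lang_paths:
  fixes R :: "('n, 't) rule set"
  assumes lin: "linear_grammar R"
  shows "Lang R S = {path_word P | P. is_path R (Some S) P None}"
proof (intro set_eqI iffI)
  fix w assume "w \<in> Lang R S"
  then have "(derives1 R)\<^sup>*\<^sup>* [Nt S] (map Tm w)" by (simp add: Lang_def)
  then obtain P Y where PY: "is_path R (Some S) P Y" "map Tm w = sf P Y"
    using path_of_derives[OF lin] by blast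
  have "Y = None"
  proof (cases Y)
    case (Some B)
    then have "Nt B \<in> set (sf P Y)" by (simp add: sf_def)
    then have "Nt B \<in> set (map Tm w)" using PY(2) by simp
    then show ?thesis by auto
  qed
  then have "map Tm w = sf P None" using PY(2) by simp
  also have "sf P None = map Tm (path_word P)" by (simp add: sf_def path_word_LR)
  finally have "(map Tm w :: ('n, 't) sym list) = map Tm (path_word P)" .
  then have "w = path_word P" by (simp add: inj_map_eq_map inj_def)
  then show "w \<in> {path_word P | P. is_path R (Some S) P None}" using PY \<open>Y = None\<close> by auto
next
  fix w assume "w \<in> {path_word P | P. is_path R (Some S) P None}"
  then obtain P where P: "is_path R (Some S) P None" "w = path_word P" by auto
  have "(derives1 R)\<^sup>*\<^sup>* [Nt S] (sf P None)" by (rule derives_path[OF lin P(1)])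
  then show "w \<in> Lang R S" using P by (simp add: Lang_def sf_def path_word_LR)
qed




section \<open>Embedding words into the free group\<close>

definition emb :: "'a list \<Rightarrow> 'a fg" where "emb w = Abs (map (\<lambda>x. (x, True)) w)"

lemma reduced_pos: "reduced (map (\<lambda>x. (x, True)) w)"
proof (induct w)
  case (Cons a w) then show ?case by (cases w) (auto simp: flp_def)
qed simp

lemma emb_append: "emb (u @ v) = emb u + emb v"
proof -
  have "reduced (map (\<lambda>x. (x, True)) u @ map (\<lambda>x. (x, True)) v)" using reduced_pos[of "u @ v"] by simp
  then show ?thesis by (simp add: emb_def Abs_plus reduced_pos red_reduced)
qed

lemma emb_inj: "emb u = emb v \<Longrightarrow> u = v"
  by (simp add: emb_def Abs_inject reduced_pos inj_map_eq_map inj_def)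

lemma morph_app: "morphism_on \<Sigma> f \<Longrightarrow> u \<in> lists \<Sigma> \<Longrightarrow> v \<in> lists \<Sigma> \<Longrightarrow> f (u @ v) = f u @ f v"
  by (simp add: morphism_on_def)

lemma cube_words:
  fixes f g :: "'t list \<Rightarrow> 'g list"
  assumes mf: "morphism_on \<Sigma> f" and mg: "morphism_on \<Sigma> g"
    and L: "\<And>b. xa b \<in> lists \<Sigma>" "\<And>b. xb b \<in> lists \<Sigma>" "\<And>b. xc b \<in> lists \<Sigma>" "\<And>b. xd b \<in> lists \<Sigma>"
      "\<And>b. ya b \<in> lists \<Sigma>" "\<And>b. yb b \<in> lists \<Sigma>" "\<And>b. yc b \<in> lists \<Sigma>" "\<And>b. yd b \<in> lists \<Sigma>"
      "m \<in> lists \<Sigma>"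
    and A: "\<And>a1 a2 a3 a4. a1 \<or> a2 \<or> a3 \<or> a4 \<Longrightarrow>
      f (xa a1 @ xb a2 @ xc a3 @ xd a4 @ m @ yd a4 @ yc a3 @ yb a2 @ ya a1)
    = g (xa a1 @ xb a2 @ xc a3 @ xd a4 @ m @ yd a4 @ yc a3 @ yb a2 @ ya a1)"
  shows "f (xa False @ xb False @ xc False @ xd False @ m @ yd False @ yc False @ yb False @ ya False)
    = g (xa False @ xb False @ xc False @ xd False @ m @ yd False @ yc False @ yb False @ ya False)"
proof -
  have dec: "emb (h (xa a1 @ xb a2 @ xc a3 @ xd a4 @ m @ yd a4 @ yc a3 @ yb a2 @ ya a1))
    = emb (h (xa a1)) + (emb (h (xb a2)) + (emb (h (xc a3)) + (emb (h (xd a4)) + (emb (h m) +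
      (emb (h (yd a4)) + (emb (h (yc a3)) + (emb (h (yb a2)) + emb (h (ya a1)))))))))"
    if "morphism_on \<Sigma> h" for h :: "'t list \<Rightarrow> 'g list" and a1 a2 a3 a4
    using L by (simp add: morph_app[OF that] emb_append)
  have "emb (f (xa False @ xb False @ xc False @ xd False @ m @ yd False @ yc False @ yb False @ ya False))
    = emb (g (xa False @ xb False @ xc False @ xd False @ m @ yd False @ yc False @ yb False @ ya False))"
    unfolding dec[OF mf] dec[OF mg]
    by (rule cube_group) (simp only: dec[OF mf, symmetric] dec[OF mg, symmetric] A)
  then show ?thesis by (rule emb_inj)
qed


lemma pl_irrefl: "irrefl lt \<Longrightarrow> \<not> path_less lt P P"
  by (simp add: path_less_def irrefl_def lexord_irreflexive)

lemma pl_trans: "trans lt \<Longrightarrow> path_less lt P Q \<Longrightarrow> path_less lt Q T \<Longrightarrow> path_less lt P T"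
  unfolding path_less_def by (auto intro: lexord_trans)

lemma pl_ctx: "path_less lt Q T \<Longrightarrow> path_less lt (A @ Q @ B) (A @ T @ B)"
  unfolding path_less_def
proof (elim disjE conjE)
  assume "length Q < length T" then show "length (A @ Q @ B) < length (A @ T @ B) \<or>
    length (A @ Q @ B) = length (A @ T @ B) \<and> (A @ Q @ B, A @ T @ B) \<in> lexord lt" by simp
next
  assume l: "length Q = length T" and q: "(Q, T) \<in> lexord lt"
  have "(Q @ B, T @ B) \<in> lexord lt" using q l by (intro lexord_sufI) simp_all
  then have "(A @ Q @ B, A @ T @ B) \<in> lexord lt" by (rule lexord_append_leftI)
  then show "length (A @ Q @ B) < length (A @ T @ B) \<or>
    length (A @ Q @ B) = length (A @ T @ B) \<and> (A @ Q @ B, A @ T @ B) \<in> lexord lt" using l by simp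
qed

lemma optimal_Nil: "optimal R lt []"
  unfolding optimal_def path_less_def by (rule exI[of _ None], rule exI[of _ None]) simp

lemma nonopt: "is_path R X p Y \<Longrightarrow> \<not> optimal R lt p \<Longrightarrow> \<exists>Q. is_path R X Q Y \<and> path_less lt Q p"
  unfolding optimal_def by blast

section \<open>Decomposition\<close>

definition cat :: "('n, 't) rule list list \<Rightarrow> ('n, 't) rule list \<Rightarrow> ('n, 't) rule list" where
  "cat Ps es = concat (map2 (\<lambda>p e. p @ [e]) (butlast Ps) es) @ last Ps"

definition isdec :: "('n, 't) rule set \<Rightarrow> (('n, 't) rule \<times> ('n, 't) rule) set \<Rightarrow> ('n, 't) rule list \<Rightarrow> ('n, 't) rule list list \<Rightarrow> ('n, 't) rule list \<Rightarrow> bool" where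
  "isdec R lt P Ps es \<longleftrightarrow> length Ps = Suc (length es) \<and> P = cat Ps es \<and>
      (\<forall>p \<in> set Ps. optimal R lt p) \<and> (\<forall>i < length es. \<not> optimal R lt (Ps ! i @ [es ! i]))"

lemma decomp_exists: "\<exists>Ps es. isdec R lt P Ps es"
proof (induct P rule: rev_induct)
  case Nil
  show ?case by (rule exI[of _ "[[]]"], rule exI[of _ "[]"]) (simp add: isdec_def cat_def optimal_Nil)
next
  case (snoc r P)
  then obtain Ps es where d: "isdec R lt P Ps es" by blast
  define B where "B = butlast Ps"
  define lp where "lp = last Ps"
  have "Ps \<noteq> []" using d by (auto simp: isdec_def)
  then have Ps: "Ps = B @ [lp]" by (simp add: B_def lp_def)
  have lB: "length B = length es" using d Ps by (simp add: isdec_def)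
  have P: "P = concat (map2 (\<lambda>p e. p @ [e]) B es) @ lp" using d by (simp add: isdec_def cat_def B_def lp_def)
  have optPs: "\<forall>p\<in>set Ps. optimal R lt p" and nopt: "\<forall>i < length es. \<not> optimal R lt (Ps ! i @ [es ! i])"
    using d by (simp_all add: isdec_def)
  show ?case
  proof (cases "optimal R lt (lp @ [r])")
    case True
    have "isdec R lt (P @ [r]) (B @ [lp @ [r]]) es"
      unfolding isdec_def cat_def
    proof (intro conjI)
      show "length (B @ [lp @ [r]]) = Suc (length es)" using lB by simp
      show "P @ [r] = concat (map2 (\<lambda>p e. p @ [e]) (butlast (B @ [lp @ [r]])) es) @ last (B @ [lp @ [r]])"
        using P by simp
      show "\<forall>p\<in>set (B @ [lp @ [r]]). optimal R lt p" using optPs True Ps by auto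
      show "\<forall>i<length es. \<not> optimal R lt ((B @ [lp @ [r]]) ! i @ [es ! i])"
        using nopt Ps lB by (auto simp: nth_append)
    qed
    then show ?thesis by blast
  next
    case False
    note nr = False
    have "isdec R lt (P @ [r]) (B @ [lp] @ [[]]) (es @ [r])"
      unfolding isdec_def cat_def
    proof (intro conjI)
      show "length (B @ [lp] @ [[]]) = Suc (length (es @ [r]))" using lB by simp
      have "map2 (\<lambda>p e. p @ [e]) (B @ [lp]) (es @ [r]) = map2 (\<lambda>p e. p @ [e]) B es @ [lp @ [r]]"
        using lB by simp
      then show "P @ [r] = concat (map2 (\<lambda>p e. p @ [e]) (butlast (B @ [lp] @ [[]])) (es @ [r])) @ last (B @ [lp] @ [[]])"
        using P by (simp add: butlast_append)
      show "\<forall>p\<in>set (B @ [lp] @ [[]]). optimal R lt p" using optPs Ps optimal_Nil by auto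
      show "\<forall>i<length (es @ [r]). \<not> optimal R lt ((B @ [lp] @ [[]]) ! i @ [(es @ [r]) ! i])"
      proof (intro allI impI)
        fix i assume i: "i < length (es @ [r])"
        show "\<not> optimal R lt ((B @ [lp] @ [[]]) ! i @ [(es @ [r]) ! i])"
        proof (cases "i < length es")
          case True
          then have "(B @ [lp] @ [[]]) ! i = Ps ! i" using Ps lB by (simp add: nth_append)
          then show ?thesis using nopt True by (simp add: nth_append)
        next
          case False
          then have "i = length es" using i by simp
          then show ?thesis using nr lB by (simp add: nth_append)
        qed
      qed
    qed
    then show ?thesis by blast
  qed
qed


definition rel3 :: "(('n, 't) rule \<times> ('n, 't) rule) set \<Rightarrow> bool \<Rightarrow> ('n, 't) rule list \<Rightarrow> ('n, 't) rule list \<Rightarrow> bool" where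
  "rel3 lt a x y \<longleftrightarrow> (a \<longrightarrow> path_less lt x y) \<and> (\<not> a \<longrightarrow> x = y)"

lemma rel3_comb: "trans lt \<Longrightarrow> rel3 lt a x y \<Longrightarrow> rel3 lt b y z \<Longrightarrow> rel3 lt (a \<or> b) x z"
  unfolding rel3_def by (auto intro: pl_trans)

lemma rel3_ctx: "rel3 lt a x y \<Longrightarrow> rel3 lt a (C @ x @ D) (C @ y @ D)"
  unfolding rel3_def by (auto intro: pl_ctx)

lemma len4: "4 \<le> length xs \<Longrightarrow> \<exists>a b c d ys. xs = a # b # c # d # ys"
  by (auto simp: numeral_eq_Suc Suc_le_length_iff)

lemma test_main:
  fixes R :: "('n, 't) rule set" and f g :: "'t list \<Rightarrow> 'g list"
  assumes cfg: "cfg N \<Sigma> R S" and lin: "linear_grammar R" and slo: "strict_linear_order_on R lt"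
    and mf: "morphism_on \<Sigma> f" and mg: "morphism_on \<Sigma> g"
    and agree: "\<forall>w \<in> Phi R lt S 3. f w = g w"
  shows "is_path R (Some S) P None \<Longrightarrow> f (path_word P) = g (path_word P)"
proof -
  have tr: "trans lt" and ir: "irrefl lt" using slo by (simp_all add: strict_linear_order_on_def)
  have finR: "finite R" using cfg by (simp add: cfg_def)
  define rk where "rk P = card {Q. set Q \<subseteq> R \<and> length Q = length P \<and> path_less lt Q P}" for P
  have meas: "(Q, P) \<in> measures [length, rk]" if q: "path_less lt Q P" "set Q \<subseteq> R" for Q P
  proof (cases "length Q < length P")
    case True then show ?thesis by simp
  next
    case False
    then have l: "length Q = length P" using q by (simp add: path_less_def)
    let ?A = "{Q'. set Q' \<subseteq> R \<and> length Q' = length Q \<and> path_less lt Q' Q}"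
    let ?B = "{Q'. set Q' \<subseteq> R \<and> length Q' = length P \<and> path_less lt Q' P}"
    have "?A \<subseteq> ?B" using l q(1) by (auto intro: pl_trans[OF tr])
    moreover have "Q \<in> ?B" "Q \<notin> ?A" using q l pl_irrefl[OF ir] by auto
    ultimately have "?A \<subset> ?B" by blast
    moreover have "finite ?B"
      by (rule finite_subset[OF _ finite_lists_length_eq[OF finR, of "length P"]]) auto
    ultimately have "card ?A < card ?B" by (rule psubset_card_mono[rotated])
    then show ?thesis using l by (simp add: rk_def)
  qed
  show "is_path R (Some S) P None \<Longrightarrow> f (path_word P) = g (path_word P)"
  proof (induct P rule: wf_induct_rule[OF wf_measures[of "[length, rk]"]])
    case (1 P)
    note IH = 1(1) and pP = 1(2)
    obtain Ps es where d: "isdec R lt P Ps es" using decomp_exists by blast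
    show ?case
    proof (cases "length es \<le> 3")
      case True
      have "path_word P \<in> Phi R lt S 3"
        unfolding Phi_def using d True pP unfolding isdec_def cat_def by blast
      then show ?thesis using agree by blast
    next
      case False
      then obtain e0 e1 e2 e3 es' where es: "es = e0 # e1 # e2 # e3 # es'" using len4[of es] by auto
      have "4 \<le> length Ps" using d es by (simp add: isdec_def)
      then obtain p0 p1 p2 p3 Ps' where Ps: "Ps = p0 # p1 # p2 # p3 # Ps'" using len4[of Ps] by auto
      have lPs': "length Ps' = Suc (length es')" using d es Ps by (simp add: isdec_def)
      then have "Ps' \<noteq> []" by auto
      define T where "T = cat Ps' es'"
      have Peq: "P = (p0 @ [e0]) @ (p1 @ [e1]) @ (p2 @ [e2]) @ (p3 @ [e3]) @ T"
        using d es Ps \<open>Ps' \<noteq> []\<close> by (simp add: isdec_def cat_def T_def)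
      have no: "\<not> optimal R lt (p0 @ [e0])" "\<not> optimal R lt (p1 @ [e1])"
        "\<not> optimal R lt (p2 @ [e2])" "\<not> optimal R lt (p3 @ [e3])"
        using d es Ps unfolding isdec_def by (auto dest: spec[of _ 0] spec[of _ 1] spec[of _ 2] spec[of _ 3])
      define S0 where "S0 = p0 @ [e0]"
      define S1 where "S1 = p1 @ [e1]"
      define S2 where "S2 = p2 @ [e2]"
      define S3 where "S3 = p3 @ [e3]"
      have pP': "is_path R (Some S) (S0 @ S1 @ S2 @ S3 @ T) None" using pP Peq by (simp add: S0_def S1_def S2_def S3_def)
      then obtain V1 V2 V3 V4 where v: "is_path R (Some S) S0 V1" "is_path R V1 S1 V2" "is_path R V2 S2 V3"
          "is_path R V3 S3 V4" "is_path R V4 T None"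
        by (auto simp: is_path_append)
      obtain Q0 where q0: "is_path R (Some S) Q0 V1" "path_less lt Q0 S0" using nonopt[OF v(1)] no(1) S0_def by blast
      obtain Q1 where q1: "is_path R V1 Q1 V2" "path_less lt Q1 S1" using nonopt[OF v(2)] no(2) S1_def by blast
      obtain Q2 where q2: "is_path R V2 Q2 V3" "path_less lt Q2 S2" using nonopt[OF v(3)] no(3) S2_def by blast
      obtain Q3 where q3: "is_path R V3 Q3 V4" "path_less lt Q3 S3" using nonopt[OF v(4)] no(4) S3_def by blast
      define A0 where "A0 a = (if a then Q0 else S0)" for a
      define A1 where "A1 a = (if a then Q1 else S1)" for a
      define A2 where "A2 a = (if a then Q2 else S2)" for a
      define A3 where "A3 a = (if a then Q3 else S3)" for a
      define X where "X a0 a1 a2 a3 = A0 a0 @ A1 a1 @ A2 a2 @ A3 a3 @ T" for a0 a1 a2 a3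
      have pX: "is_path R (Some S) (X a0 a1 a2 a3) None" for a0 a1 a2 a3
      proof -
        have "is_path R (Some S) (A0 a0) V1" "is_path R V1 (A1 a1) V2" "is_path R V2 (A2 a2) V3"
          "is_path R V3 (A3 a3) V4"
          by (simp_all add: A0_def A1_def A2_def A3_def q0 q1 q2 q3 v)
        then show ?thesis using v(5) by (auto simp: X_def is_path_append)
      qed
      have r0: "rel3 lt a (A0 a) S0" and r1: "rel3 lt a (A1 a) S1" and r2: "rel3 lt a (A2 a) S2"
        and r3: "rel3 lt a (A3 a) S3" for a
        by (simp_all add: rel3_def A0_def A1_def A2_def A3_def q0 q1 q2 q3)
      have rX: "rel3 lt (((a0 \<or> a1) \<or> a2) \<or> a3) (X a0 a1 a2 a3) (S0 @ S1 @ S2 @ S3 @ T)" for a0 a1 a2 a3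
      proof -
        have s0: "rel3 lt a0 (X a0 a1 a2 a3) (S0 @ A1 a1 @ A2 a2 @ A3 a3 @ T)"
          using rel3_ctx[OF r0, where C="[]" and D="A1 a1 @ A2 a2 @ A3 a3 @ T"] by (simp add: X_def)
        have s1: "rel3 lt a1 (S0 @ A1 a1 @ A2 a2 @ A3 a3 @ T) (S0 @ S1 @ A2 a2 @ A3 a3 @ T)"
          using rel3_ctx[OF r1, where C=S0 and D="A2 a2 @ A3 a3 @ T"] by simp
        have s2: "rel3 lt a2 (S0 @ S1 @ A2 a2 @ A3 a3 @ T) (S0 @ S1 @ S2 @ A3 a3 @ T)"
          using rel3_ctx[OF r2, where C="S0 @ S1" and D="A3 a3 @ T"] by simp
        have s3: "rel3 lt a3 (S0 @ S1 @ S2 @ A3 a3 @ T) (S0 @ S1 @ S2 @ S3 @ T)"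
          using rel3_ctx[OF r3, where C="S0 @ S1 @ S2" and D=T] by simp
        show ?thesis by (rule rel3_comb[OF tr rel3_comb[OF tr rel3_comb[OF tr s0 s1] s2] s3])
      qed
      have setX: "set (X a0 a1 a2 a3) \<subseteq> R" for a0 a1 a2 a3 by (rule is_path_set[OF pX])
      have good: "f (path_word (X a0 a1 a2 a3)) = g (path_word (X a0 a1 a2 a3))"
        if "a0 \<or> a1 \<or> a2 \<or> a3" for a0 a1 a2 a3
      proof -
        have "path_less lt (X a0 a1 a2 a3) P"
          using rX[of a0 a1 a2 a3] that pP' Peq by (simp add: rel3_def S0_def S1_def S2_def S3_def)
        then have "(X a0 a1 a2 a3, P) \<in> measures [length, rk]" using setX by (intro meas)
        then show ?thesis using IH pX by blast
      qed
      have pw: "path_word (X a0 a1 a2 a3) = Lw (A0 a0) @ Lw (A1 a1) @ Lw (A2 a2) @ Lw (A3 a3) @ path_word T @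
          Rw (A3 a3) @ Rw (A2 a2) @ Rw (A1 a1) @ Rw (A0 a0)" for a0 a1 a2 a3
        by (simp add: X_def path_word_append)
      have inL: "Lw (A0 a) \<in> lists \<Sigma>" "Lw (A1 a) \<in> lists \<Sigma>" "Lw (A2 a) \<in> lists \<Sigma>" "Lw (A3 a) \<in> lists \<Sigma>"
          "Rw (A0 a) \<in> lists \<Sigma>" "Rw (A1 a) \<in> lists \<Sigma>" "Rw (A2 a) \<in> lists \<Sigma>" "Rw (A3 a) \<in> lists \<Sigma>"
          "path_word T \<in> lists \<Sigma>" for a
      proof -
        have "set (X a a a a) \<subseteq> R" by (rule setX)
        then have s: "set (A0 a) \<subseteq> R" "set (A1 a) \<subseteq> R" "set (A2 a) \<subseteq> R" "set (A3 a) \<subseteq> R" "set T \<subseteq> R"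
          by (simp_all add: X_def)
        show "Lw (A0 a) \<in> lists \<Sigma>" "Lw (A1 a) \<in> lists \<Sigma>" "Lw (A2 a) \<in> lists \<Sigma>" "Lw (A3 a) \<in> lists \<Sigma>"
          "Rw (A0 a) \<in> lists \<Sigma>" "Rw (A1 a) \<in> lists \<Sigma>" "Rw (A2 a) \<in> lists \<Sigma>" "Rw (A3 a) \<in> lists \<Sigma>"
          "path_word T \<in> lists \<Sigma>"
          using LR_in_lists[OF cfg lin] s by (simp_all add: path_word_LR)
      qed
      have "f (path_word (X False False False False)) = g (path_word (X False False False False))"
        unfolding pw
        by (rule cube_words[OF mf mg, where xa="\<lambda>a. Lw (A0 a)" and xb="\<lambda>a. Lw (A1 a)"
              and xc="\<lambda>a. Lw (A2 a)" and xd="\<lambda>a. Lw (A3 a)" and ya="\<lambda>a. Rw (A0 a)"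
              and yb="\<lambda>a. Rw (A1 a)" and yc="\<lambda>a. Rw (A2 a)" and yd="\<lambda>a. Rw (A3 a)", simplified])
           (use inL good pw in auto)
      moreover have "X False False False False = P"
        using Peq by (simp add: X_def A0_def A1_def A2_def A3_def S0_def S1_def S2_def S3_def)
      ultimately show ?thesis by simp
    qed
  qed
qed


section \<open>Counting\<close>

lemma lexord_total_len:
  assumes tot: "total_on R lt"
  shows "set x \<subseteq> R \<Longrightarrow> set y \<subseteq> R \<Longrightarrow> length x = length y \<Longrightarrow> x \<noteq> y \<Longrightarrow>
    (x, y) \<in> lexord lt \<or> (y, x) \<in> lexord lt"
proof (induct x arbitrary: y)
  case Nil then show ?case by simp
next
  case (Cons a x y)
  then obtain b y' where y: "y = b # y'" by (cases y) auto
  show ?case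
  proof (cases "a = b")
    case True
    then have "x \<noteq> y'" using Cons.prems y by simp
    then have "(x, y') \<in> lexord lt \<or> (y', x) \<in> lexord lt" using Cons y by (intro Cons.hyps) auto
    then show ?thesis using True y by auto
  next
    case False
    then have "(a, b) \<in> lt \<or> (b, a) \<in> lt" using tot Cons.prems y by (auto simp: total_on_def)
    then show ?thesis using y by auto
  qed
qed

lemma optimal_min:
  assumes "optimal R lt p" "is_path R X p Y" "is_path R X P' Y"
  shows "\<not> path_less lt P' p"
proof (cases p)
  case Nil then show ?thesis by (simp add: path_less_def)
next
  case (Cons r p1)
  obtain X0 Y0 where o: "is_path R X0 p Y0" "\<forall>P'. is_path R X0 P' Y0 \<longrightarrow> \<not> path_less lt P' p"
    using assms(1) by (auto simp: optimal_def)
  have "X0 = X" using o(1) assms(2) Cons by simp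
  moreover have "Y0 = Y" using o(1) assms(2) \<open>X0 = X\<close> by (simp add: is_path_det)
  ultimately show ?thesis using o(2) assms(3) by blast
qed

lemma opt_unique:
  assumes tot: "total_on R lt"
    and "is_path R X p Y" "is_path R X p' Y" "optimal R lt p" "optimal R lt p'"
  shows "p = p'"
proof (rule ccontr)
  assume ne: "p \<noteq> p'"
  have n1: "\<not> path_less lt p' p" by (rule optimal_min[OF assms(4,2,3)])
  have n2: "\<not> path_less lt p p'" by (rule optimal_min[OF assms(5,3,2)])
  have "length p = length p'" using n1 n2 by (auto simp: path_less_def)
  then have "(p, p') \<in> lexord lt \<or> (p', p) \<in> lexord lt"
    using lexord_total_len[OF tot] ne is_path_set[OF assms(2)] is_path_set[OF assms(3)] by blast
  then show False using n1 n2 \<open>length p = length p'\<close> by (auto simp: path_less_def)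
qed

lemma cat_Cons: "Ps \<noteq> [] \<Longrightarrow> length Ps = Suc (length es) \<Longrightarrow>
    cat (p # Ps) (e # es) = p @ [e] @ cat Ps es"
  by (simp add: cat_def)

lemma dec_unique:
  assumes tot: "total_on R lt"
  shows "length Ps = Suc (length es) \<Longrightarrow> is_path R X (cat Ps es) None \<Longrightarrow> (\<forall>p\<in>set Ps. optimal R lt p) \<Longrightarrow>
    length Ps' = Suc (length es) \<Longrightarrow> is_path R X (cat Ps' es) None \<Longrightarrow> (\<forall>p\<in>set Ps'. optimal R lt p) \<Longrightarrow>
    cat Ps es = cat Ps' es"
proof (induct es arbitrary: X Ps Ps')
  case Nil
  then obtain p p' where "Ps = [p]" "Ps' = [p']" by (auto simp: length_Suc_conv)
  then show ?case using Nil opt_unique[OF tot, of X p None p'] by (simp add: cat_def)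
next
  case (Cons e es)
  obtain p Ps1 where Ps: "Ps = p # Ps1" using Cons.prems(1) by (cases Ps) auto
  obtain p' Ps1' where Ps': "Ps' = p' # Ps1'" using Cons.prems(4) by (cases Ps') auto
  have l1: "length Ps1 = Suc (length es)" "length Ps1' = Suc (length es)" using Cons.prems Ps Ps' by simp_all
  then have ne: "Ps1 \<noteq> []" "Ps1' \<noteq> []" by auto
  have c1: "cat Ps (e # es) = p @ [e] @ cat Ps1 es" using Ps ne l1 by (simp add: cat_Cons)
  have c2: "cat Ps' (e # es) = p' @ [e] @ cat Ps1' es" using Ps' ne l1 by (simp add: cat_Cons)
  obtain Y where y: "is_path R X p Y" "is_path R Y ([e] @ cat Ps1 es) None"
    using Cons.prems(2) c1 by (auto simp: is_path_append)
  obtain Y' where y': "is_path R X p' Y'" "is_path R Y' ([e] @ cat Ps1' es) None"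
    using Cons.prems(5) c2 by (auto simp: is_path_append)
  have "Y = Some (fst e)" "Y' = Some (fst e)" using y(2) y'(2) by simp_all
  then have "p = p'" using opt_unique[OF tot y(1)] y'(1) Cons.prems Ps Ps' by auto
  have "is_path R (rtgt e) (cat Ps1 es) None" "is_path R (rtgt e) (cat Ps1' es) None"
    using y(2) y'(2) by simp_all
  then have "cat Ps1 es = cat Ps1' es" using Cons.hyps[of Ps1 "rtgt e" Ps1'] l1 Cons.prems Ps Ps' by auto
  then show ?case using c1 c2 \<open>p = p'\<close> by simp
qed

lemma set_map2_es: "length B = length es \<Longrightarrow> set es \<subseteq> set (concat (map2 (\<lambda>p e. p @ [e]) B es))"
proof (induct es arbitrary: B)
  case (Cons e es)
  then obtain b B' where "B = b # B'" by (cases B) auto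
  then show ?case using Cons by auto
qed simp

lemma Phi_card:
  fixes R :: "('n, 't) rule set"
  assumes finR: "finite R" and tot: "total_on R lt"
  shows "finite (Phi R lt S k) \<and> card (Phi R lt S k) \<le> (\<Sum>i = 0..k. card R ^ i)"
proof -
  define C where "C es Ps = (length Ps = Suc (length es) \<and> is_path R (Some S) (cat Ps es) None \<and>
      (\<forall>p\<in>set Ps. optimal R lt p))" for es Ps
  define E where "E = {es. set es \<subseteq> R \<and> length es \<le> k}"
  define \<phi> where "\<phi> es = path_word (cat (SOME Ps. C es Ps) es)" for es
  have sub: "Phi R lt S k \<subseteq> \<phi> ` E"
  proof
    fix w assume "w \<in> Phi R lt S k"
    then obtain Ps es where w: "w = path_word (cat Ps es)" "length es \<le> k" "C es Ps"
      unfolding Phi_def C_def cat_def by blast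
    have "C es (SOME Ps. C es Ps)" using w(3) by (rule someI)
    then have "cat (SOME Ps. C es Ps) es = cat Ps es"
      using dec_unique[OF tot] w(3) unfolding C_def by blast
    then have "w = \<phi> es" using w by (simp add: \<phi>_def)
    moreover have "set es \<subseteq> R"
    proof -
      have "length (butlast Ps) = length es" using w(3) by (simp add: C_def)
      have "set (cat Ps es) \<subseteq> R" using w(3) by (auto simp: C_def dest: is_path_set)
      moreover have "set es \<subseteq> set (cat Ps es)"
        using set_map2_es[OF \<open>length (butlast Ps) = length es\<close>] by (auto simp: cat_def)
      ultimately show ?thesis by blast
    qed
    ultimately show "w \<in> \<phi> ` E" using w(2) by (auto simp: E_def)
  qed
  have E: "E = (\<Union>i\<in>{0..k}. {es. set es \<subseteq> R \<and> length es = i})" by (auto simp: E_def)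
  have finE: "finite E" unfolding E by (auto intro: finite_lists_length_eq[OF finR])
  have "card E \<le> (\<Sum>i = 0..k. card {es. set es \<subseteq> R \<and> length es = i})"
    unfolding E by (rule card_UN_le) simp
  also have "\<dots> = (\<Sum>i = 0..k. card R ^ i)" by (simp add: card_lists_length_eq[OF finR])
  finally have cE: "card E \<le> (\<Sum>i = 0..k. card R ^ i)" .
  have "finite (Phi R lt S k)" using sub finE by (rule finite_subset[OF _ finite_imageI])
  moreover have "card (Phi R lt S k) \<le> card (\<phi> ` E)" using sub finE by (intro card_mono) auto
  moreover have "card (\<phi> ` E) \<le> card E" using finE by (rule card_image_le)
  ultimately show ?thesis using cE by linarith
qed


theorem mainTheorem2:
  fixes N :: "'n set" and \<Sigma> :: "'t set" and R :: "('n, 't) rule set" and S :: 'n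
    and lt :: "(('n, 't) rule \<times> ('n, 't) rule) set"
  assumes "cfg N \<Sigma> R S"
    and "linear_grammar R"
    and "strict_linear_order_on R lt"
  shows "test_set TYPE('g) \<Sigma> (Phi R lt S 3) (Lang R S)
       \<and> (\<forall>k. finite (Phi R lt S k) \<and> card (Phi R lt S k) \<le> (\<Sum>i = 0..k. card R ^ i))"
proof -
  note cfg = assms(1) and lin = assms(2) and slo = assms(3)
  have tot: "total_on R lt" using slo by (simp add: strict_linear_order_on_def)
  have finR: "finite R" using cfg by (simp add: cfg_def)
  have sub: "Phi R lt S 3 \<subseteq> Lang R S"
  proof
    fix w assume "w \<in> Phi R lt S 3"
    then obtain P where "w = path_word P" "is_path R (Some S) P None" unfolding Phi_def by blast
    then show "w \<in> Lang R S" using Lang_paths[OF lin] by blast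
  qed
  have T: "test_set TYPE('g) \<Sigma> (Phi R lt S 3) (Lang R S)"
    unfolding test_set_def
  proof (intro conjI allI impI)
    show "Phi R lt S 3 \<subseteq> Lang R S" by (rule sub)
    fix f g :: "'t list \<Rightarrow> 'g list"
    assume h: "morphism_on \<Sigma> f \<and> morphism_on \<Sigma> g \<and> (\<forall>w\<in>Phi R lt S 3. f w = g w)"
    show "\<forall>w\<in>Lang R S. f w = g w"
    proof
      fix w assume "w \<in> Lang R S"
      then obtain P where "w = path_word P" "is_path R (Some S) P None" using Lang_paths[OF lin] by blast
      then show "f w = g w" using test_main[OF cfg lin slo, of f g P] h by blast
    qed
  qed
  show ?thesis using T Phi_card[OF finR tot] by blast
qed

end
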